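(* Let $n\ge 1$, $N=\{1,\dots,n\}$, $A=[0,1]$, and let $f$ be an OWA mechanism with weights $w_1,\dots,w_n\in[0,1]$, $\sum_j w_j=1$. Then $f$ satisfies individual fair share (IFS) if and only if $w_1 \ge \frac1n$ and $w_n \ge \frac1n$.
   Context: A mechanism is a map $f:A^n\to A$ from profiles $x=(x_i)_{i\in N}$ of reported locations to a facility location. An OWA mechanism with weights $w_1,\dots,w_n$ returns $f(x)=\sum_{j=1}^n w_j x_{\pi(j)}$, where $\pi$ is a permutation of $N$ with $x_{\pi(1)}\le\dots\le x_{\pi(n)}$. The mechanism $f$ satisfies IFS if for every profile $x\in A^n$ and every $i\in N$, $|x_i - f(x)| \le 1-\frac1n$. *)

theory Defs
  imports "HOL-Analysis.Analysis"
begin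

text \<open>Agents are N = {0..<n} (0-based), profiles are x :: nat => real.
  Weights w_1..w_n are indexed 1..n. The OWA mechanism returns
  sum_{j=1..n} w_j * x_(pi j), where x_(pi 1) <= ... <= x_(pi n) is the
  sorted profile (the j-th order statistic, independent of tie-breaking).\<close>

definition owa :: "nat \<Rightarrow> (nat \<Rightarrow> real) \<Rightarrow> (nat \<Rightarrow> real) \<Rightarrow> real" where
  "owa n w x = (\<Sum>j=1..n. w j * (sort (map x [0..<n])) ! (j - 1))"

definition IFS :: "nat \<Rightarrow> ((nat \<Rightarrow> real) \<Rightarrow> real) \<Rightarrow> bool" where
  "IFS n f \<longleftrightarrow> (\<forall>x. (\<forall>i<n. x i \<in> {0..1}) \<longrightarrow>
      (\<forall>i<n. \<bar>x i - f x\<bar> \<le> 1 - 1 / real n))"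

end

theory Submission
  imports Defs
begin

lemma sum_ifj: "finite A \<Longrightarrow> k \<in> A \<Longrightarrow> (\<Sum>j\<in>A. w j - (if j = k then w j else 0)) = (\<Sum>j\<in>A. w j) - (w k::real)"
  by (simp add: sum_subtractf)

theorem theorem3:
  fixes n :: nat and w :: "nat \<Rightarrow> real"
  assumes "n \<ge> 1"
    and "\<And>j. j \<in> {1..n} \<Longrightarrow> w j \<in> {0..1}"
    and "(\<Sum>j=1..n. w j) = 1"
  shows "IFS n (owa n w) \<longleftrightarrow> (w 1 \<ge> 1 / real n \<and> w n \<ge> 1 / real n)"
proof
  assume I: "IFS n (owa n w)"
  show "w 1 \<ge> 1 / real n \<and> w n \<ge> 1 / real n"
  proof (cases "n = 1")
    case True then show ?thesis using assms(3) by simp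
  next
    case False
    hence n2: "n \<ge> 2" using assms(1) by simp
    define x1 where "x1 = (\<lambda>i::nat. if i = 0 then 0 else (1::real))"
    define x2 where "x2 = (\<lambda>i::nat. if i = n - 1 then 1 else (0::real))"
    have m1: "map x1 [0..<n] = 0 # replicate (n-1) 1"
      using n2 by (intro nth_equalityI) (auto simp: x1_def nth_Cons')
    have m2: "map x2 [0..<n] = replicate (n-1) 0 @ [1]"
      using n2 by (intro nth_equalityI) (auto simp: x2_def nth_append)
    have s1: "sorted (0 # replicate (n-1) (1::real))" by (auto simp: sorted_iff_nth_mono nth_Cons')
    have s2: "sorted (replicate (n-1) 0 @ [1::real])" by (auto simp: sorted_append)
    have o1: "owa n w x1 = (\<Sum>j=1..n. w j - (if j = 1 then w j else 0))"
      unfolding owa_def m1 sorted_sort_id[OF s1]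
      by (intro sum.cong) (auto simp: nth_Cons')
    have o2: "owa n w x2 = (\<Sum>j=1..n. (if j = n then w j else 0))"
      unfolding owa_def m2 sorted_sort_id[OF s2]
      by (intro sum.cong) (auto simp: nth_append)
    have f1: "owa n w x1 = 1 - w 1" using o1 sum_ifj[of "{1..n}" 1 w] assms by simp
    have f2: "owa n w x2 = w n" using o2 assms by simp
    have "\<bar>x1 0 - owa n w x1\<bar> \<le> 1 - 1 / real n"
    proof -
      have "\<forall>i<n. x1 i \<in> {0..1}" by (auto simp: x1_def)
      moreover have "0 < n" using n2 by simp
      ultimately show ?thesis using I unfolding IFS_def by blast
    qed
    moreover have "\<bar>x2 (n-1) - owa n w x2\<bar> \<le> 1 - 1 / real n"
    proof -
      have "\<forall>i<n. x2 i \<in> {0..1}" by (auto simp: x2_def)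
      moreover have "n - 1 < n" using n2 by simp
      ultimately show ?thesis using I unfolding IFS_def by blast
    qed
    ultimately show ?thesis using f1 f2 by (auto simp: x1_def x2_def)
  qed
next
  assume W: "w 1 \<ge> 1 / real n \<and> w n \<ge> 1 / real n"
  show "IFS n (owa n w)"
    unfolding IFS_def
  proof (intro allI impI)
    fix x :: "nat \<Rightarrow> real" and i
    assume X: "\<forall>i<n. x i \<in> {0..1}" and i: "i < n"
    define s where "s = sort (map x [0..<n])"
    have len: "length s = n" by (simp add: s_def)
    have srt: "sorted s" by (simp add: s_def)
    have set: "set s = x ` {0..<n}" by (simp add: s_def)
    have rng: "\<And>k. k < n \<Longrightarrow> s ! k \<in> {0..1}"
    proof -
      fix k assume "k < n"
      hence "s ! k \<in> set s" using len by simp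
      thus "s ! k \<in> {0..1}" using set X by auto
    qed
    have lo: "\<And>k. k < n \<Longrightarrow> s ! 0 \<le> s ! k" using srt len by (simp add: sorted_nth_mono)
    have hi: "\<And>k. k < n \<Longrightarrow> s ! k \<le> s ! (n-1)" using srt len by (simp add: sorted_nth_mono)
    have xi: "x i \<in> set s" using set i by auto
    then obtain k where k: "k < n" "x i = s ! k" using len by (auto simp: in_set_conv_nth)
    have f: "owa n w x = (\<Sum>j=1..n. w j * s ! (j-1))" by (simp add: owa_def s_def)
    have A: "s ! (n-1) - owa n w x \<le> 1 - w n"
    proof -
      have "s ! (n-1) - owa n w x = (\<Sum>j=1..n. w j * (s ! (n-1) - s ! (j-1)))"
        using assms(3) f by (simp add: sum_subtractf right_diff_distrib sum_distrib_right[symmetric])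
      also have "\<dots> \<le> (\<Sum>j=1..n. w j - (if j = n then w j else 0))"
      proof (rule sum_mono)
        fix j assume j: "j \<in> {1..n}"
        have wj: "0 \<le> w j" using assms(2) j by auto
        have jn: "j - 1 < n" "n - 1 < n" "0 < n" using j assms(1) by auto
        have "s ! (n-1) - s ! (j-1) \<le> 1" "0 \<le> s ! (n-1) - s ! (j-1)"
          using rng[of "n-1"] rng[of "j-1"] hi[of "j-1"] jn by auto
        then show "w j * (s ! (n-1) - s ! (j-1)) \<le> w j - (if j = n then w j else 0)"
          using wj j by (auto simp: mult_left_le)
      qed
      also have "\<dots> = 1 - w n" using sum_ifj[of "{1..n}" n w] assms by simp
      finally show ?thesis .
    qed
    have B: "owa n w x - s ! 0 \<le> 1 - w 1"
    proof -
      have "owa n w x - s ! 0 = (\<Sum>j=1..n. w j * (s ! (j-1) - s ! 0))"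
        using assms(3) f by (simp add: sum_subtractf right_diff_distrib sum_distrib_right[symmetric])
      also have "\<dots> \<le> (\<Sum>j=1..n. w j - (if j = 1 then w j else 0))"
      proof (rule sum_mono)
        fix j assume j: "j \<in> {1..n}"
        have wj: "0 \<le> w j" using assms(2) j by auto
        have jn: "j - 1 < n" "n - 1 < n" "0 < n" using j assms(1) by auto
        have "s ! (j-1) - s ! 0 \<le> 1" "0 \<le> s ! (j-1) - s ! 0"
          using rng[of "0"] rng[of "j-1"] lo[of "j-1"] jn by auto
        then show "w j * (s ! (j-1) - s ! 0) \<le> w j - (if j = 1 then w j else 0)"
          using wj j by (auto simp: mult_left_le)
      qed
      also have "\<dots> = 1 - w 1" using sum_ifj[of "{1..n}" 1 w] assms by simp
      finally show ?thesis .
    qed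
    show "\<bar>x i - owa n w x\<bar> \<le> 1 - 1 / real n"
      using A B W k lo[of k] hi[of k] by auto
  qed
qed

end
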